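(* Let $T\ge1$, $K_0=\{x_0\}$ and $K_1,\dots,K_T\subseteq\mathbb R$ compact, $\Omega=K_0\times\dots\times K_T$, and let $\widehat Q$ be a martingale measure on $\Omega$ with marginals $\widehat Q_t$. Let $u_0,\dots,u_T:\mathbb R\to[-\infty,+\infty)$ be concave, upper semicontinuous, nondecreasing with $u_t(0)=0$ and $u_t(x)\le x$ for all $x$. For $\varphi_t\in C_b(K_t)$ define $$U_{\widehat Q_t}(\varphi_t)=\sup_{\alpha,\lambda\in\mathbb R}\Big(\int_{K_t}u_t(\varphi_t(x_t)+\alpha x_t+\lambda)\,d\widehat Q_t(x_t)-(\alpha x_0+\lambda)\Big).$$ Then for each $t=0,\dots,T$: 1. $U_{\widehat Q_t}$ is real valued on $C_b(K_t)$ and $U_{\widehat Q_t}(0)=0$; 2. $U_{\widehat Q_t}$ is concave and nondecreasing; 3. $U_{\widehat Q_t}$ is stock additive on $C_b(K_t)$: $U_{\widehat Q_t}(\varphi_t+\alpha_tX_t+\lambda_t)=U_{\widehat Q_t}(\varphi_t)+\alpha_tx_0+\lambda_t$ for all $\alpha_t,\lambda_t\in\mathbb R$, $\varphi_t\in C_b(K_t)$, where $X_t(x_t)=x_t$.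
   Context: A martingale measure on $\Omega$ is a Borel probability measure under which the canonical process $X_t(x)=x_t$ is a martingale with respect to its natural filtration. $C_b(K_t)$: continuous real functions on $K_t$. *)

theory Defs
  imports "HOL-Probability.Probability"
begin

text \<open>Paths are functions \<open>nat \<Rightarrow> real\<close>; the path space
  \<open>\<Omega> = K_0 \<times> ... \<times> K_T\<close> is \<open>PiE {0..T} K\<close> with the product
  sigma-algebra of the Borel sets of the \<open>K_t\<close> (this equals the Borel sigma-algebra
  of \<open>\<Omega>\<close>, since everything is second countable).\<close>

definition path_sets :: "nat \<Rightarrow> (nat \<Rightarrow> real set) \<Rightarrow> (nat \<Rightarrow> real) measure" where
  "path_sets T K = PiM {0..T} (\<lambda>t. restrict_space borel (K t))"

definition nat_filtration :: "(nat \<Rightarrow> real) measure \<Rightarrow> nat \<Rightarrow> (nat \<Rightarrow> real) set set" where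
  "nat_filtration Q t =
     sigma_sets (space Q) (\<Union>s\<in>{0..t}. {(\<lambda>x. x s) -` B \<inter> space Q | B. B \<in> sets borel})"

definition martingale_measure :: "nat \<Rightarrow> (nat \<Rightarrow> real) measure \<Rightarrow> bool" where
  "martingale_measure T Q \<longleftrightarrow>
     prob_space Q \<and>
     (\<forall>t\<le>T. integrable Q (\<lambda>x. x t)) \<and>
     (\<forall>t<T. \<forall>A\<in>nat_filtration Q t.
        set_lebesgue_integral Q A (\<lambda>x. x (Suc t)) = set_lebesgue_integral Q A (\<lambda>x. x t))"

definition marginal :: "(nat \<Rightarrow> real) measure \<Rightarrow> (nat \<Rightarrow> real set) \<Rightarrow> nat \<Rightarrow> real measure" where
  "marginal Q K t = distr Q (restrict_space borel (K t)) (\<lambda>x. x t)"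

definition eint :: "'a measure \<Rightarrow> ('a \<Rightarrow> ereal) \<Rightarrow> ereal" where
  "eint M g = enn2ereal (\<integral>\<^sup>+ x. e2ennreal (g x) \<partial>M) - enn2ereal (\<integral>\<^sup>+ x. e2ennreal (- g x) \<partial>M)"

definition Ufun :: "(real \<Rightarrow> ereal) \<Rightarrow> real measure \<Rightarrow> real \<Rightarrow> (real \<Rightarrow> real) \<Rightarrow> ereal" where
  "Ufun u Qt x0 \<phi> =
     (SUP p\<in>(UNIV :: (real \<times> real) set).
        eint Qt (\<lambda>y. u (\<phi> y + fst p * y + snd p)) - ereal (fst p * x0 + snd p))"

definition concave_ereal :: "(real \<Rightarrow> ereal) \<Rightarrow> bool" where
  "concave_ereal u \<longleftrightarrow> (\<forall>x y a. 0 \<le> a \<and> a \<le> 1 \<longrightarrow>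
      ereal a * u x + ereal (1 - a) * u y \<le> u (a * x + (1 - a) * y))"

definition usc_ereal :: "(real \<Rightarrow> ereal) \<Rightarrow> bool" where
  "usc_ereal u \<longleftrightarrow> (\<forall>c. closed {x. c \<le> u x})"

end

theory Submission
  imports Defs
begin

lemma eint_mono:
  fixes f g :: "'a \<Rightarrow> ereal"
  assumes "AE x in M. f x \<le> g x"
  shows "eint M f \<le> eint M g"
proof -
  have 1: "(\<integral>\<^sup>+x. e2ennreal (f x) \<partial>M) \<le> (\<integral>\<^sup>+x. e2ennreal (g x) \<partial>M)"
    by (intro nn_integral_mono_AE) (rule AE_mp[OF assms], auto intro!: AE_I2 e2ennreal_mono)
  have 2: "(\<integral>\<^sup>+x. e2ennreal (- g x) \<partial>M) \<le> (\<integral>\<^sup>+x. e2ennreal (- f x) \<partial>M)"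
    by (intro nn_integral_mono_AE) (rule AE_mp[OF assms], auto intro!: AE_I2 e2ennreal_mono)
  show ?thesis unfolding eint_def
    by (intro ereal_minus_mono) (use 1 2 in \<open>simp_all add: less_eq_ennreal.rep_eq\<close>)
qed

lemma eint_cong_AE:
  assumes "AE x in M. f x = g x"
  shows "eint M f = eint M g"
proof -
  have "(\<integral>\<^sup>+x. e2ennreal (f x) \<partial>M) = (\<integral>\<^sup>+x. e2ennreal (g x) \<partial>M)"
    by (rule nn_integral_cong_AE) (use assms in auto)
  moreover have "(\<integral>\<^sup>+x. e2ennreal (- f x) \<partial>M) = (\<integral>\<^sup>+x. e2ennreal (- g x) \<partial>M)"
    by (rule nn_integral_cong_AE) (use assms in auto)
  ultimately show ?thesis unfolding eint_def by simp
qed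

lemma enn2ereal_fin: "a \<noteq> \<infinity> \<Longrightarrow> enn2ereal a = ereal (enn2real a)"
  by (cases a) (auto simp: enn2ereal_ennreal)

lemma eint_real:
  assumes "integrable M h"
  shows "eint M (\<lambda>x. ereal (h x)) = ereal (integral\<^sup>L M h)"
proof -
  from assms have m: "h \<in> borel_measurable M" and f1: "(\<integral>\<^sup>+x. ennreal (h x) \<partial>M) \<noteq> \<infinity>"
    and f2: "(\<integral>\<^sup>+x. ennreal (- h x) \<partial>M) \<noteq> \<infinity>"
    by (auto simp: real_integrable_def)
  have e: "(\<lambda>x. - ereal (h x)) = (\<lambda>x. ereal (- h x))" by simp
  show ?thesis unfolding eint_def real_lebesgue_integral_def[OF assms] e e2ennreal_ereal
    using f1 f2 by (simp add: enn2ereal_fin)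
qed

lemma eint_finite:
  fixes f :: "'a \<Rightarrow> ereal"
  assumes fm: "finite_measure M" and m: "f \<in> borel_measurable M"
    and ub: "\<And>x. x \<in> space M \<Longrightarrow> f x \<le> ereal C" and ne: "eint M f \<noteq> -\<infinity>"
  shows "integrable M (\<lambda>x. real_of_ereal (f x))"
    and "AE x in M. f x = ereal (real_of_ereal (f x))"
    and "eint M f = ereal (integral\<^sup>L M (\<lambda>x. real_of_ereal (f x)))"
proof -
  interpret finite_measure M by fact
  have "(\<integral>\<^sup>+x. e2ennreal (f x) \<partial>M) \<le> (\<integral>\<^sup>+x. ennreal (max C 0) \<partial>M)"
    by (intro nn_integral_mono) (metis e2ennreal_ereal e2ennreal_mono ub ennreal_max_0 max.cobounded1 ennreal_leI order_trans)
  also have "\<dots> < \<infinity>" by (simp add: ennreal_mult_eq_top_iff less_top[symmetric])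
  finally have P: "(\<integral>\<^sup>+x. e2ennreal (f x) \<partial>M) \<noteq> \<infinity>" by simp
  have N: "(\<integral>\<^sup>+x. e2ennreal (- f x) \<partial>M) \<noteq> \<infinity>"
  proof
    assume "(\<integral>\<^sup>+x. e2ennreal (- f x) \<partial>M) = \<infinity>"
    then have "eint M f = -\<infinity>" using P unfolding eint_def by (simp add: enn2ereal_fin)
    with ne show False by simp
  qed
  have "AE x in M. e2ennreal (- f x) \<noteq> \<infinity>"
    by (rule nn_integral_PInf_AE) (use m N in auto)
  then show ae: "AE x in M. f x = ereal (real_of_ereal (f x))"
  proof (rule AE_mp, intro AE_I2 impI)
    fix x assume x: "x \<in> space M" and "e2ennreal (- f x) \<noteq> \<infinity>"
    then have "f x \<noteq> -\<infinity>" by auto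
    moreover have "f x \<noteq> \<infinity>" using ub[OF x] by auto
    ultimately show "f x = ereal (real_of_ereal (f x))" by (cases "f x") auto
  qed
  have hm: "(\<lambda>x. real_of_ereal (f x)) \<in> borel_measurable M" using m by measurable
  have "(\<integral>\<^sup>+x. ennreal (real_of_ereal (f x)) \<partial>M) = (\<integral>\<^sup>+x. e2ennreal (f x) \<partial>M)"
    by (rule nn_integral_cong_AE) (use ae in \<open>eventually_elim, metis e2ennreal_ereal\<close>)
  moreover have "(\<integral>\<^sup>+x. ennreal (- real_of_ereal (f x)) \<partial>M) = (\<integral>\<^sup>+x. e2ennreal (- f x) \<partial>M)"
    by (rule nn_integral_cong_AE) (use ae in \<open>eventually_elim, metis e2ennreal_ereal uminus_ereal.simps(1)\<close>)
  ultimately show int: "integrable M (\<lambda>x. real_of_ereal (f x))"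
    using P N hm by (simp add: real_integrable_def)
  show "eint M f = ereal (integral\<^sup>L M (\<lambda>x. real_of_ereal (f x)))"
    using eint_cong_AE[OF ae] eint_real[OF int] by simp
qed

lemma sup_combine:
  fixes F G :: "'i \<Rightarrow> ereal" and a b c :: real
  assumes a: "a > 0" and b: "b > 0"
    and sF: "(SUP p. F p) = ereal sf" and sG: "(SUP q. G q) = ereal sg"
    and key: "\<And>p q. F p \<noteq> -\<infinity> \<Longrightarrow> G q \<noteq> -\<infinity> \<Longrightarrow> ereal a * F p + ereal b * G q \<le> ereal c"
  shows "ereal a * (SUP p. F p) + ereal b * (SUP q. G q) \<le> ereal c"
proof -
  have Fle: "F p \<le> ereal sf" for p using sF by (metis SUP_upper UNIV_I)
  have Gle: "G q \<le> ereal sg" for q using sG by (metis SUP_upper UNIV_I)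
  have "(SUP p. F p) \<le> ereal ((c - b * sg) / a)"
  proof (rule SUP_least)
    fix p
    show "F p \<le> ereal ((c - b * sg) / a)"
    proof (cases "F p = -\<infinity>")
      case False
      then obtain fp where fp: "F p = ereal fp" using Fle[of p] by (cases "F p") auto
      have "(SUP q. G q) \<le> ereal ((c - a * fp) / b)"
      proof (rule SUP_least)
        fix q
        show "G q \<le> ereal ((c - a * fp) / b)"
        proof (cases "G q = -\<infinity>")
          case False
          then obtain gq where gq: "G q = ereal gq" using Gle[of q] by (cases "G q") auto
          have "a * fp + b * gq \<le> c" using key[of p q] fp gq by simp
          then show ?thesis using gq b by (simp add: field_simps)
        qed simp
      qed
      then have "sg \<le> (c - a * fp) / b" using sG by simp
      then have "fp \<le> (c - b * sg) / a" using a b by (simp add: field_simps)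
      then show ?thesis using fp by simp
    qed simp
  qed
  then have "sf \<le> (c - b * sg) / a" using sF by simp
  then have "a * sf + b * sg \<le> c" using a by (simp add: field_simps)
  then show ?thesis using sF sG by simp
qed

lemma U_props:
  fixes M :: "real measure" and S :: "real set" and u :: "real \<Rightarrow> ereal" and x0 :: real
  assumes P: "prob_space M" and sM: "sets M = sets (restrict_space borel S)" and cS: "compact S"
    and mean: "integral\<^sup>L M (\<lambda>y. y) = x0"
    and conc: "concave_ereal u" and usc: "usc_ereal u" and mon: "mono u" and u0: "u 0 = 0"
    and ule: "\<forall>x. u x \<le> ereal x"
  shows "let U = Ufun u M x0 in
     (\<forall>\<phi>. continuous_on S \<phi> \<longrightarrow> \<bar>U \<phi>\<bar> \<noteq> \<infinity>) \<and>
     U (\<lambda>_. 0) = 0 \<and>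
     (\<forall>\<phi> \<psi> a. continuous_on S \<phi> \<and> continuous_on S \<psi> \<and> 0 \<le> a \<and> a \<le> 1 \<longrightarrow>
        ereal a * U \<phi> + ereal (1 - a) * U \<psi> \<le> U (\<lambda>y. a * \<phi> y + (1 - a) * \<psi> y)) \<and>
     (\<forall>\<phi> \<psi>. continuous_on S \<phi> \<and> continuous_on S \<psi> \<and> (\<forall>y\<in>S. \<phi> y \<le> \<psi> y)
        \<longrightarrow> U \<phi> \<le> U \<psi>) \<and>
     (\<forall>\<phi> \<alpha> l. continuous_on S \<phi> \<longrightarrow>
        U (\<lambda>y. \<phi> y + \<alpha> * y + l) = U \<phi> + ereal (\<alpha> * x0 + l))"
proof -
  interpret prob_space M by fact
  have spM: "space M = S"
    using sets_eq_imp_space_eq[OF sM] by (simp add: space_restrict_space)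
  have um: "u \<in> borel_measurable borel"
  proof (rule borel_measurableI_ge)
    fix y :: ereal
    have "closed {x. y \<le> u x}" using usc by (simp add: usc_ereal_def)
    then show "{x \<in> space borel. y \<le> u x} \<in> sets borel" by simp
  qed
  have meas: "\<phi> \<in> borel_measurable M" if "continuous_on S \<phi>" for \<phi> :: "real \<Rightarrow> real"
    unfolding measurable_cong_sets[OF sM refl] by (rule borel_measurable_continuous_on_restrict[OF that])
  have bnd: "\<exists>B. \<forall>y\<in>S. \<bar>\<phi> y\<bar> \<le> B" if "continuous_on S \<phi>" for \<phi> :: "real \<Rightarrow> real"
  proof -
    have "bounded (\<phi> ` S)" by (intro compact_imp_bounded compact_continuous_image that cS)
    then show ?thesis by (auto simp: bounded_real)
  qed
  have intg: "integrable M \<phi>" if c: "continuous_on S \<phi>" for \<phi> :: "real \<Rightarrow> real"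
  proof -
    obtain B where B: "\<forall>y\<in>S. \<bar>\<phi> y\<bar> \<le> B" using bnd[OF c] by blast
    show ?thesis
      by (rule integrable_const_bound[where B=B]) (use B spM meas[OF c] in auto)
  qed
  have cid: "continuous_on S (\<lambda>y. y)" by (rule continuous_on_id)
  have intid: "integrable M (\<lambda>y. y)" by (rule intg[OF cid])
  define I where "I \<phi> p = eint M (\<lambda>y. u (\<phi> y + fst p * y + snd p))" for \<phi> :: "real \<Rightarrow> real" and p :: "real \<times> real"
  define F where "F \<phi> p = I \<phi> p - ereal (fst p * x0 + snd p)" for \<phi> :: "real \<Rightarrow> real" and p :: "real \<times> real"
  have UF: "Ufun u M x0 \<phi> = (SUP p. F \<phi> p)" for \<phi>
    unfolding Ufun_def F_def I_def by simp
  have gm: "(\<lambda>y. u (\<phi> y + fst p * y + snd p)) \<in> borel_measurable M" if c: "continuous_on S \<phi>" for \<phi> p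
  proof -
    have "(\<lambda>y. \<phi> y + fst p * y + snd p) \<in> borel_measurable M"
      by (intro borel_measurable_add borel_measurable_times borel_measurable_const meas[OF c] meas[OF cid])
    then show ?thesis using measurable_compose[OF _ um] by blast
  qed
  have ub: "F \<phi> p \<le> ereal (integral\<^sup>L M \<phi>)" if c: "continuous_on S \<phi>" for \<phi> p
  proof -
    have i1: "integrable M (\<lambda>y. \<phi> y + fst p * y + snd p)"
      using intg[OF c] intid by simp
    have "I \<phi> p \<le> eint M (\<lambda>y. ereal (\<phi> y + fst p * y + snd p))"
      unfolding I_def by (rule eint_mono) (use ule in auto)
    also have "\<dots> = ereal (integral\<^sup>L M (\<lambda>y. \<phi> y + fst p * y + snd p))"
      by (rule eint_real[OF i1])
    also have "integral\<^sup>L M (\<lambda>y. \<phi> y + fst p * y + snd p) = integral\<^sup>L M \<phi> + (fst p * x0 + snd p)"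
      using intg[OF c] intid mean by (simp add: prob_space)
    finally have "I \<phi> p \<le> ereal (integral\<^sup>L M \<phi> + (fst p * x0 + snd p))" .
    then show ?thesis unfolding F_def by (cases "I \<phi> p") auto
  qed
  have lb: "\<exists>B. ereal (- B) \<le> Ufun u M x0 \<phi>" if c: "continuous_on S \<phi>" for \<phi>
  proof -
    obtain B where B: "\<forall>y\<in>S. \<bar>\<phi> y\<bar> \<le> B" using bnd[OF c] by blast
    have "eint M (\<lambda>_. ereal 0) \<le> I \<phi> (0, B)"
      unfolding I_def
    proof (rule eint_mono, rule AE_I2)
      fix y assume "y \<in> space M"
      then have "0 \<le> \<phi> y + 0 * y + B" using B spM by force
      then have "u 0 \<le> u (\<phi> y + fst (0::real, B) * y + snd (0::real, B))" using mon by (simp add: mono_def)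
      then show "ereal 0 \<le> u (\<phi> y + fst (0::real, B) * y + snd (0::real, B))" using u0 by (simp add: zero_ereal_def[symmetric])
    qed
    moreover have "eint M (\<lambda>_. ereal 0) = 0" using eint_real[of M "\<lambda>_. 0"] by simp
    ultimately have "0 \<le> I \<phi> (0, B)" by simp
    then have "ereal (- B) \<le> F \<phi> (0, B)" unfolding F_def
      by (cases "I \<phi> (0, B)") auto
    also have "\<dots> \<le> Ufun u M x0 \<phi>" unfolding UF by (rule SUP_upper) simp
    finally show ?thesis by blast
  qed
  have fin: "\<bar>Ufun u M x0 \<phi>\<bar> \<noteq> \<infinity>" if c: "continuous_on S \<phi>" for \<phi>
  proof -
    have "Ufun u M x0 \<phi> \<le> ereal (integral\<^sup>L M \<phi>)" unfolding UF by (rule SUP_least, rule ub[OF c])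
    moreover obtain B where "ereal (- B) \<le> Ufun u M x0 \<phi>" using lb[OF c] by blast
    ultimately show ?thesis by auto
  qed
  have U0: "Ufun u M x0 (\<lambda>_. 0) = 0"
  proof (rule antisym)
    have "Ufun u M x0 (\<lambda>_. 0) \<le> ereal (integral\<^sup>L M (\<lambda>_. 0::real))"
      unfolding UF by (rule SUP_least, rule ub) simp
    then show "Ufun u M x0 (\<lambda>_. 0) \<le> 0" by (simp add: zero_ereal_def)
    have "F (\<lambda>_. 0) (0, 0) = eint M (\<lambda>_. ereal 0)" unfolding F_def I_def using u0 by (simp add: zero_ereal_def[symmetric])
    also have "\<dots> = 0" using eint_real[of M "\<lambda>_. 0"] by simp
    finally have "0 \<le> F (\<lambda>_. 0) (0, 0)" by simp
    also have "\<dots> \<le> Ufun u M x0 (\<lambda>_. 0)" unfolding UF by (rule SUP_upper) simp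
    finally show "0 \<le> Ufun u M x0 (\<lambda>_. 0)" .
  qed
  have monoU: "Ufun u M x0 \<phi> \<le> Ufun u M x0 \<psi>"
    if c1: "continuous_on S \<phi>" and c2: "continuous_on S \<psi>" and le: "\<forall>y\<in>S. \<phi> y \<le> \<psi> y" for \<phi> \<psi>
    unfolding UF
  proof (rule SUP_mono)
    fix p :: "real \<times> real"
    have "I \<phi> p \<le> I \<psi> p" unfolding I_def
    proof (rule eint_mono, rule AE_I2)
      fix y assume "y \<in> space M"
      then have "\<phi> y + fst p * y + snd p \<le> \<psi> y + fst p * y + snd p" using le spM by auto
      then show "u (\<phi> y + fst p * y + snd p) \<le> u (\<psi> y + fst p * y + snd p)" using mon by (simp add: mono_def)
    qed
    then have "F \<phi> p \<le> F \<psi> p" unfolding F_def by (rule ereal_minus_mono) simp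
    then show "\<exists>m\<in>UNIV. F \<phi> p \<le> F \<psi> m" by blast
  qed
  have stock: "Ufun u M x0 (\<lambda>y. \<phi> y + \<alpha> * y + l) = Ufun u M x0 \<phi> + ereal (\<alpha> * x0 + l)"
    for \<phi> \<alpha> l
  proof -
    define s where "s p = (fst p + \<alpha>, snd p + l)" for p :: "real \<times> real"
    have Fs: "F (\<lambda>y. \<phi> y + \<alpha> * y + l) p = F \<phi> (s p) + ereal (\<alpha> * x0 + l)" for p
    proof -
      have "I (\<lambda>y. \<phi> y + \<alpha> * y + l) p = I \<phi> (s p)"
        unfolding I_def s_def by (simp add: algebra_simps)
      then show ?thesis unfolding F_def s_def
        by (cases "I \<phi> (fst p + \<alpha>, snd p + l)") (auto simp: algebra_simps)
    qed
    have surj: "range s = UNIV"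
    proof (rule surjI)
      fix q show "s (fst q - \<alpha>, snd q - l) = q" by (simp add: s_def)
    qed
    have "Ufun u M x0 (\<lambda>y. \<phi> y + \<alpha> * y + l) = (SUP p. F \<phi> (s p) + ereal (\<alpha> * x0 + l))"
      unfolding UF Fs ..
    also have "\<dots> = (SUP p. F \<phi> (s p)) + ereal (\<alpha> * x0 + l)"
      by (rule SUP_ereal_add_left) auto
    also have "(SUP p. F \<phi> (s p)) = (SUP q\<in>range s. F \<phi> q)" by (simp add: image_comp)
    also have "\<dots> = Ufun u M x0 \<phi>" unfolding UF surj ..
    finally show ?thesis .
  qed
  have conc_U: "ereal a * Ufun u M x0 \<phi> + ereal (1 - a) * Ufun u M x0 \<psi>
      \<le> Ufun u M x0 (\<lambda>y. a * \<phi> y + (1 - a) * \<psi> y)"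
    if c1: "continuous_on S \<phi>" and c2: "continuous_on S \<psi>" and a0: "0 \<le> a" and a1: "a \<le> 1" for \<phi> \<psi> a
  proof -
    consider "a = 0" | "a = 1" | "0 < a \<and> a < 1" using a0 a1 by force
    then show ?thesis
    proof cases
      case 1 then show ?thesis by (simp add: zero_ereal_def[symmetric])
    next
      case 2 then show ?thesis by (simp add: zero_ereal_def[symmetric])
    next
      case 3
      then have ap: "0 < a" and bp: "0 < 1 - a" by auto
      define wc where "wc y = a * \<phi> y + (1 - a) * \<psi> y" for y
      have c3: "continuous_on S wc" unfolding wc_def by (intro continuous_intros c1 c2)
      obtain sf where sf: "Ufun u M x0 \<phi> = ereal sf" using fin[OF c1] by (cases "Ufun u M x0 \<phi>") auto
      obtain sg where sg: "Ufun u M x0 \<psi> = ereal sg" using fin[OF c2] by (cases "Ufun u M x0 \<psi>") auto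
      obtain sc where sc: "Ufun u M x0 wc = ereal sc" using fin[OF c3] by (cases "Ufun u M x0 wc") auto
      have fI: "integrable M (\<lambda>y. real_of_ereal (u (\<phi>' y + fst p * y + snd p))) \<and>
          (AE y in M. u (\<phi>' y + fst p * y + snd p) = ereal (real_of_ereal (u (\<phi>' y + fst p * y + snd p)))) \<and>
          I \<phi>' p = ereal (integral\<^sup>L M (\<lambda>y. real_of_ereal (u (\<phi>' y + fst p * y + snd p))))"
        if c: "continuous_on S \<phi>'" and ne: "F \<phi>' p \<noteq> -\<infinity>" for \<phi>' p
      proof -
        have cc: "continuous_on S (\<lambda>y. \<phi>' y + fst p * y + snd p)" by (intro continuous_intros c)
        obtain C where C: "\<forall>y\<in>S. \<bar>\<phi>' y + fst p * y + snd p\<bar> \<le> C" using bnd[OF cc] by blast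
        have ubC: "u (\<phi>' y + fst p * y + snd p) \<le> ereal C" if "y \<in> space M" for y
        proof -
          have "u (\<phi>' y + fst p * y + snd p) \<le> ereal (\<phi>' y + fst p * y + snd p)" using ule by blast
          also have "\<dots> \<le> ereal C" using C that spM by force
          finally show ?thesis .
        qed
        have "I \<phi>' p \<noteq> -\<infinity>" using ne unfolding F_def by auto
        then have ne': "eint M (\<lambda>y. u (\<phi>' y + fst p * y + snd p)) \<noteq> -\<infinity>" unfolding I_def .
        note E = eint_finite[OF _ gm[OF c] ubC ne']
        show ?thesis using E unfolding I_def by (simp add: finite_measure_axioms)
      qed
      have "ereal a * (SUP p. F \<phi> p) + ereal (1 - a) * (SUP q. F \<psi> q) \<le> ereal sc"
      proof (rule sup_combine[OF ap bp])
        show "(SUP p. F \<phi> p) = ereal sf" using sf UF by simp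
        show "(SUP p. F \<psi> p) = ereal sg" using sg UF by simp
        fix p q assume n1: "F \<phi> p \<noteq> -\<infinity>" and n2: "F \<psi> q \<noteq> -\<infinity>"
        define h1 where "h1 y = real_of_ereal (u (\<phi> y + fst p * y + snd p))" for y
        define h2 where "h2 y = real_of_ereal (u (\<psi> y + fst q * y + snd q))" for y
        define r where "r = (a * fst p + (1 - a) * fst q, a * snd p + (1 - a) * snd q)"
        have i1: "integrable M h1" and ae1: "AE y in M. u (\<phi> y + fst p * y + snd p) = ereal (h1 y)"
          and e1: "I \<phi> p = ereal (integral\<^sup>L M h1)"
          using fI[OF c1 n1] unfolding h1_def by auto
        have i2: "integrable M h2" and ae2: "AE y in M. u (\<psi> y + fst q * y + snd q) = ereal (h2 y)"
          and e2: "I \<psi> q = ereal (integral\<^sup>L M h2)"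
          using fI[OF c2 n2] unfolding h2_def by auto
        have "AE y in M. ereal (a * h1 y + (1 - a) * h2 y) \<le> u (wc y + fst r * y + snd r)"
          using ae1 ae2
        proof eventually_elim
          case (elim y)
          have "ereal a * u (\<phi> y + fst p * y + snd p) + ereal (1 - a) * u (\<psi> y + fst q * y + snd q)
              \<le> u (a * (\<phi> y + fst p * y + snd p) + (1 - a) * (\<psi> y + fst q * y + snd q))"
            using conc a0 a1 unfolding concave_ereal_def by blast
          also have "a * (\<phi> y + fst p * y + snd p) + (1 - a) * (\<psi> y + fst q * y + snd q)
              = wc y + fst r * y + snd r"
            unfolding wc_def r_def by (simp add: algebra_simps)
          finally show ?case using elim by simp
        qed
        then have "eint M (\<lambda>y. ereal (a * h1 y + (1 - a) * h2 y)) \<le> I wc r"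
          unfolding I_def by (rule eint_mono)
        also have "eint M (\<lambda>y. ereal (a * h1 y + (1 - a) * h2 y))
            = ereal (a * integral\<^sup>L M h1 + (1 - a) * integral\<^sup>L M h2)"
          using eint_real[of M "\<lambda>y. a * h1 y + (1 - a) * h2 y"] i1 i2 by simp
        finally have le: "ereal (a * integral\<^sup>L M h1 + (1 - a) * integral\<^sup>L M h2) \<le> I wc r" .
        have "ereal a * F \<phi> p + ereal (1 - a) * F \<psi> q
            = ereal (a * integral\<^sup>L M h1 + (1 - a) * integral\<^sup>L M h2 - (fst r * x0 + snd r))"
          unfolding F_def e1 e2 r_def by (simp add: algebra_simps)
        also have "\<dots> \<le> F wc r" unfolding F_def using le by (cases "I wc r") auto
        also have "\<dots> \<le> Ufun u M x0 wc" unfolding UF by (rule SUP_upper) simp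
        finally show "ereal a * F \<phi> p + ereal (1 - a) * F \<psi> q \<le> ereal sc" using sc by simp
      qed
      then show ?thesis using UF sc unfolding wc_def by simp
    qed
  qed
  show ?thesis unfolding Let_def
    using fin U0 monoU stock conc_U by blast
qed

theorem lemma4p2:
  fixes T :: nat and K :: "nat \<Rightarrow> real set" and x0 :: real
    and Q :: "(nat \<Rightarrow> real) measure" and u :: "nat \<Rightarrow> real \<Rightarrow> ereal"
  assumes "T \<ge> 1"
    and "K 0 = {x0}"
    and "\<forall>t\<in>{1..T}. compact (K t)"
    and "sets Q = sets (path_sets T K)"
    and "martingale_measure T Q"
    and "\<forall>t\<le>T. concave_ereal (u t) \<and> usc_ereal (u t) \<and> mono (u t) \<and> u t 0 = 0
               \<and> (\<forall>x. u t x \<le> ereal x)"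
  shows "\<forall>t\<le>T. let U = Ufun (u t) (marginal Q K t) x0 in
     (\<forall>\<phi>. continuous_on (K t) \<phi> \<longrightarrow> \<bar>U \<phi>\<bar> \<noteq> \<infinity>) \<and>
     U (\<lambda>_. 0) = 0 \<and>
     (\<forall>\<phi> \<psi> a. continuous_on (K t) \<phi> \<and> continuous_on (K t) \<psi> \<and> 0 \<le> a \<and> a \<le> 1 \<longrightarrow>
        ereal a * U \<phi> + ereal (1 - a) * U \<psi> \<le> U (\<lambda>y. a * \<phi> y + (1 - a) * \<psi> y)) \<and>
     (\<forall>\<phi> \<psi>. continuous_on (K t) \<phi> \<and> continuous_on (K t) \<psi> \<and> (\<forall>y\<in>K t. \<phi> y \<le> \<psi> y)
        \<longrightarrow> U \<phi> \<le> U \<psi>) \<and>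
     (\<forall>\<phi> \<alpha> l. continuous_on (K t) \<phi> \<longrightarrow>
        U (\<lambda>y. \<phi> y + \<alpha> * y + l) = U \<phi> + ereal (\<alpha> * x0 + l))"
proof (intro allI impI)
  fix t assume tT: "t \<le> T"
  have mm: "martingale_measure T Q" by fact
  then interpret Qp: prob_space Q by (simp add: martingale_measure_def)
  have sQ: "sets Q = sets (path_sets T K)" by fact
  have spQ: "space Q = PiE {0..T} K"
    using sets_eq_imp_space_eq[OF sQ] by (simp add: path_sets_def space_PiM space_restrict_space)
  have mQ: "(\<lambda>x. x s) \<in> measurable Q (restrict_space borel (K s))" if "s \<le> T" for s
    unfolding measurable_cong_sets[OF sQ refl] path_sets_def
    by (rule measurable_component_singleton) (use that in auto)
  have EX: "integral\<^sup>L Q (\<lambda>x. x s) = x0" if "s \<le> T" for s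
    using that
  proof (induction s)
    case 0
    have "integral\<^sup>L Q (\<lambda>x. x 0) = integral\<^sup>L Q (\<lambda>x. x0)"
    proof (rule Bochner_Integration.integral_cong)
      fix x assume "x \<in> space Q"
      then have "x 0 \<in> K 0" unfolding spQ by (auto simp: PiE_def Pi_def)
      then show "x 0 = x0" using assms(2) by simp
    qed simp
    then show ?case by (simp add: Qp.prob_space)
  next
    case (Suc s)
    then have sT: "s < T" by simp
    have top: "space Q \<in> nat_filtration Q s" unfolding nat_filtration_def by (rule sigma_sets_top)
    have sl: "set_lebesgue_integral Q (space Q) f = integral\<^sup>L Q f" for f :: "(nat \<Rightarrow> real) \<Rightarrow> real"
      unfolding set_lebesgue_integral_def by (rule Bochner_Integration.integral_cong) auto
    have "set_lebesgue_integral Q (space Q) (\<lambda>x. x (Suc s)) = set_lebesgue_integral Q (space Q) (\<lambda>x. x s)"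
      using mm sT top unfolding martingale_measure_def by blast
    then show ?case using Suc.IH sT by (simp add: sl)
  qed
  define M where "M = marginal Q K t"
  have PM: "prob_space M" unfolding M_def marginal_def by (rule Qp.prob_space_distr[OF mQ[OF tT]])
  have sM: "sets M = sets (restrict_space borel (K t))" unfolding M_def marginal_def by simp
  have cK: "compact (K t)"
  proof (cases "t = 0")
    case True then show ?thesis using assms(2) by simp
  next
    case False then show ?thesis using assms(3) tT by auto
  qed
  have idm: "(\<lambda>y::real. y) \<in> borel_measurable (restrict_space borel (K t))"
    by (rule measurable_restrict_space1) simp
  have mean: "integral\<^sup>L M (\<lambda>y. y) = x0"
    unfolding M_def marginal_def
    using integral_distr[OF mQ[OF tT] idm] EX[OF tT] by simp
  have hu: "concave_ereal (u t) \<and> usc_ereal (u t) \<and> mono (u t) \<and> u t 0 = 0 \<and> (\<forall>x. u t x \<le> ereal x)"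
    using assms(6) tT by blast
  show "let U = Ufun (u t) (marginal Q K t) x0 in
     (\<forall>\<phi>. continuous_on (K t) \<phi> \<longrightarrow> \<bar>U \<phi>\<bar> \<noteq> \<infinity>) \<and>
     U (\<lambda>_. 0) = 0 \<and>
     (\<forall>\<phi> \<psi> a. continuous_on (K t) \<phi> \<and> continuous_on (K t) \<psi> \<and> 0 \<le> a \<and> a \<le> 1 \<longrightarrow>
        ereal a * U \<phi> + ereal (1 - a) * U \<psi> \<le> U (\<lambda>y. a * \<phi> y + (1 - a) * \<psi> y)) \<and>
     (\<forall>\<phi> \<psi>. continuous_on (K t) \<phi> \<and> continuous_on (K t) \<psi> \<and> (\<forall>y\<in>K t. \<phi> y \<le> \<psi> y)
        \<longrightarrow> U \<phi> \<le> U \<psi>) \<and>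
     (\<forall>\<phi> \<alpha> l. continuous_on (K t) \<phi> \<longrightarrow>
        U (\<lambda>y. \<phi> y + \<alpha> * y + l) = U \<phi> + ereal (\<alpha> * x0 + l))"
    using U_props[OF PM sM cK mean] hu unfolding M_def by blast
qed

end
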